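(* Let $\lambda>0$ be the wavelength, let $N\ge 1$ be an integer, and let $\delta=\lambda/2$. For $n\in\{1,\dots,N\}$ let $\bar{x}_n=\left(n-\frac{N+1}{2}\right)\delta$ and $$\mathcal{A}_n=\left\{(x,y,0): |x-\bar{x}_n|\le \tfrac{\delta}{2},\ |y|\le \tfrac{\delta}{2}\right\},$$ and let $A=\delta^2$ denote the area of each $\mathcal{A}_n$. Let $z>0$ and $F>0$ with $z\neq F$, and define $$\hat{G}_{\rm ULA}=\frac{1}{(NA)^2}\left|\sum_{n=1}^N\int_{\mathcal{A}_n} e^{+\mathrm{i}\frac{2\pi}{\lambda}\left(\frac{x^2}{2F}+\frac{y^2}{2F}\right)}\,e^{-\mathrm{i}\frac{2\pi}{\lambda}\left(\frac{x^2}{2z}+\frac{y^2}{2z}\right)}\,dx\,dy\right|^2 .$$ Then, with $z_{\rm eff}=\frac{Fz}{|F-z|}$ and $a=\frac{\lambda}{8z_{\rm eff}}$, $$\hat{G}_{\rm ULA}=\frac{\left(C^2(\sqrt{a})+S^2(\sqrt{a})\right)\left(C^2(\sqrt{a}\,N)+S^2(\sqrt{a}\,N)\right)}{(Na)^2},$$ where $C$ and $S$ are the Fresnel integrals.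
   Context: The Fresnel integrals are $C(u)=\int_0^u\cos\left(\frac{\pi t^2}{2}\right)dt$ and $S(u)=\int_0^u\sin\left(\frac{\pi t^2}{2}\right)dt$. Physically, $\hat{G}_{\rm ULA}$ is the (Fresnel-approximated) normalized array gain of a uniform linear array of $N$ square antennas of side $\delta$ along the $x$-axis, centered at the origin, receiving from a transmitter at $(0,0,z)$ with matched filtering focused at $(0,0,F)$; $\mathrm{i}$ is the imaginary unit. *)

theory Defs
  imports "HOL-Analysis.Analysis"
begin

definition fresnelC :: "real \<Rightarrow> real" where
  "fresnelC u = (if 0 \<le> u then integral {0..u} (\<lambda>t. cos (pi * t\<^sup>2 / 2))
                 else - integral {u..0} (\<lambda>t. cos (pi * t\<^sup>2 / 2)))"

definition fresnelS :: "real \<Rightarrow> real" where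
  "fresnelS u = (if 0 \<le> u then integral {0..u} (\<lambda>t. sin (pi * t\<^sup>2 / 2))
                 else - integral {u..0} (\<lambda>t. sin (pi * t\<^sup>2 / 2)))"

definition ula_antenna :: "real \<Rightarrow> nat \<Rightarrow> nat \<Rightarrow> (real \<times> real) set" where
  "ula_antenna lam N n =
     (let \<delta> = lam / 2; xn = (real n - (real N + 1) / 2) * \<delta>
      in {(x, y). \<bar>x - xn\<bar> \<le> \<delta> / 2 \<and> \<bar>y\<bar> \<le> \<delta> / 2})"

definition G_ULA :: "real \<Rightarrow> nat \<Rightarrow> real \<Rightarrow> real \<Rightarrow> real" where
  "G_ULA lam N z F =
     (let \<delta> = lam / 2; A = \<delta>\<^sup>2 in
      1 / (real N * A)\<^sup>2 *
      (cmod (\<Sum>n = 1..N. integral (ula_antenna lam N n)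
          (\<lambda>(x, y). exp (\<i> * complex_of_real (2 * pi / lam * (x\<^sup>2 / (2 * F) + y\<^sup>2 / (2 * F))))
                  * exp (- \<i> * complex_of_real (2 * pi / lam * (x\<^sup>2 / (2 * z) + y\<^sup>2 / (2 * z)))))))\<^sup>2)"

end

theory Submission imports Defs begin

lemma fr_int_gen:
  fixes h :: "real \<Rightarrow> real" and Fh :: "real \<Rightarrow> real"
  assumes ch: "continuous_on UNIV h"
    and Fdef: "\<And>u. Fh u = (if 0 \<le> u then integral {0..u} h else - integral {u..0} h)"
    and ab: "a \<le> b"
  shows "(h has_integral (Fh b - Fh a)) {a..b}"
proof -
  have int: "\<And>p q. h integrable_on {p..q}"
    by (rule integrable_continuous_real) (rule continuous_on_subset[OF ch], simp)
  have "integral {a..b} h = Fh b - Fh a"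
  proof (cases "0 \<le> a")
    case True
    then show ?thesis using ab Henstock_Kurzweil_Integration.integral_combine[where a=0 and c=a and b=b and f=h] int
      by (simp add: Fdef)
  next
    case False
    show ?thesis
    proof (cases "0 \<le> b")
      case True
      then show ?thesis using False Henstock_Kurzweil_Integration.integral_combine[where a=a and c=0 and b=b and f=h] int
        by (simp add: Fdef)
    next
      case F2: False
      then show ?thesis using False ab Henstock_Kurzweil_Integration.integral_combine[where a=a and c=b and b=0 and f=h] int
        by (simp add: Fdef)
    qed
  qed
  then show ?thesis using int integrable_integral by metis
qed

lemma fC_int: "a \<le> b \<Longrightarrow> ((\<lambda>t. cos (pi * t\<^sup>2 / 2)) has_integral (fresnelC b - fresnelC a)) {a..b}"
  by (rule fr_int_gen[where Fh=fresnelC]) (auto intro!: continuous_intros simp: fresnelC_def)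

lemma fS_int: "a \<le> b \<Longrightarrow> ((\<lambda>t. sin (pi * t\<^sup>2 / 2)) has_integral (fresnelS b - fresnelS a)) {a..b}"
  by (rule fr_int_gen[where Fh=fresnelS]) (auto intro!: continuous_intros simp: fresnelS_def)

definition Ps :: "real \<Rightarrow> real \<Rightarrow> complex" where
  "Ps s u = complex_of_real (fresnelC u) + \<i> * complex_of_real (s * fresnelS u)"

definition hs :: "real \<Rightarrow> real \<Rightarrow> complex" where
  "hs s t = complex_of_real (cos (pi * t\<^sup>2 / 2)) + \<i> * complex_of_real (s * sin (pi * t\<^sup>2 / 2))"

lemma Ps_int: "a \<le> b \<Longrightarrow> (hs s has_integral (Ps s b - Ps s a)) {a..b}"
proof -
  assume ab: "a \<le> b"
  note 1 = has_integral_of_real[OF fC_int[OF ab], where 'b=complex]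
  note 2 = has_integral_of_real[OF has_integral_mult_right[OF fS_int[OF ab], of s], where 'b=complex]
  note 3 = has_integral_mult_right[OF 2, of \<i>]
  have "(hs s has_integral (complex_of_real (fresnelC b - fresnelC a) + \<i> * complex_of_real (s * (fresnelS b - fresnelS a)))) {a..b}"
    unfolding hs_def by (rule has_integral_add[OF 1 3])
  moreover have "complex_of_real (fresnelC b - fresnelC a) + \<i> * complex_of_real (s * (fresnelS b - fresnelS a)) = Ps s b - Ps s a"
    unfolding Ps_def by (simp add: algebra_simps)
  ultimately show ?thesis by simp
qed

lemma hs_cont: "continuous_on A (hs s)"
  unfolding hs_def by (auto intro!: continuous_intros)

lemma Ps_deriv: "(Ps s has_vector_derivative hs s u) (at u)"
proof -
  define R where "R = \<bar>u\<bar> + 1"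
  have uin: "u \<in> {-R..R}" unfolding R_def by auto
  have eq: "\<And>v. v \<in> {-R..R} \<Longrightarrow> Ps s v = Ps s (-R) + integral {-R..v} (hs s)"
  proof -
    fix v assume "v \<in> {-R..R}"
    then have "integral {-R..v} (hs s) = Ps s v - Ps s (-R)"
      by (intro integral_unique Ps_int) simp
    then show "Ps s v = Ps s (-R) + integral {-R..v} (hs s)" by simp
  qed
  have d: "((\<lambda>v. Ps s (-R) + integral {-R..v} (hs s)) has_vector_derivative hs s u) (at u within {-R..R})"
    using has_vector_derivative_add[OF has_vector_derivative_const integral_has_vector_derivative[OF hs_cont uin]]
    by (simp only: add_0_left)
  have "(Ps s has_vector_derivative hs s u) (at u within {-R..R})"
    by (rule has_vector_derivative_transform[OF uin eq d])
  moreover have "u \<in> interior {-R..R}" unfolding R_def by auto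
  ultimately show ?thesis by (metis at_within_interior)
qed

lemma even_odd_gen:
  fixes h :: "real \<Rightarrow> real" and Fh :: "real \<Rightarrow> real"
  assumes ev: "\<And>t. h (-t) = h t"
    and Fdef: "\<And>u. Fh u = (if 0 \<le> u then integral {0..u} h else - integral {u..0} h)"
  shows "Fh (-u) = - Fh u"
proof -
  have r: "\<And>b. integral {-b..0} h = integral {0..b} h"
  proof -
    fix b :: real
    have "integral {-b .. -0} (\<lambda>x. h (-x)) = integral {0..b} h" by (rule Henstock_Kurzweil_Integration.integral_reflect_real)
    then show "integral {-b..0} h = integral {0..b} h" using ev by simp
  qed
  show ?thesis
  proof (cases "u = 0")
    case True then show ?thesis by (simp add: Fdef)
  next
    case False
    show ?thesis
    proof (cases "u > 0")
      case True then show ?thesis using r[of u] by (simp add: Fdef)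
    next
      case F2: False
      then have "u < 0" using False by simp
      then show ?thesis using r[of "-u"] by (simp add: Fdef)
    qed
  qed
qed

lemma fC_odd: "fresnelC (-u) = - fresnelC u"
  by (rule even_odd_gen[where h="\<lambda>t. cos (pi * t\<^sup>2 / 2)"]) (auto simp: fresnelC_def)

lemma fS_odd: "fresnelS (-u) = - fresnelS u"
  by (rule even_odd_gen[where h="\<lambda>t. sin (pi * t\<^sup>2 / 2)"]) (auto simp: fresnelS_def)

lemma Ps_odd: "Ps s (-u) = - Ps s u"
  unfolding Ps_def fC_odd fS_odd by simp

lemma hs_exp:
  assumes s: "s = 1 \<or> s = -1"
  shows "hs s x = exp (\<i> * complex_of_real (s * (pi * x\<^sup>2 / 2)))"
proof -
  have "exp (\<i> * complex_of_real (s * (pi * x\<^sup>2 / 2))) = cis (s * (pi * x\<^sup>2 / 2))"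
    by (simp add: cis_conv_exp)
  also have "\<dots> = hs s x" using s
    by (auto simp: hs_def complex_eq_iff)
  finally show ?thesis by simp
qed

lemma scaled_deriv:
  assumes b: "\<beta> > 0"
  shows "((\<lambda>t. Ps s (\<beta> * t) / complex_of_real \<beta>) has_vector_derivative hs s (\<beta> * t)) (at t within A)"
proof -
  have d1: "((\<lambda>t. \<beta> * t) has_vector_derivative \<beta>) (at t within A)"
    using has_vector_derivative_mult_right[OF has_vector_derivative_id, of \<beta>] by simp
  have d2: "(Ps s has_vector_derivative hs s (\<beta> * t)) (at ((\<lambda>t. \<beta> * t) t) within (\<lambda>t. \<beta> * t) ` A)"
    using Ps_deriv has_vector_derivative_at_within by blast
  have d3: "((Ps s \<circ> (\<lambda>t. \<beta> * t)) has_vector_derivative (\<beta> *\<^sub>R hs s (\<beta> * t))) (at t within A)"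
    by (rule vector_diff_chain_within[OF d1 d2])
  have d4: "((\<lambda>t. inverse (complex_of_real \<beta>) * (Ps s \<circ> (\<lambda>t. \<beta> * t)) t) has_vector_derivative inverse (complex_of_real \<beta>) * (\<beta> *\<^sub>R hs s (\<beta> * t))) (at t within A)"
    by (rule has_vector_derivative_mult_right[OF d3])
  have e1: "\<And>t. inverse (complex_of_real \<beta>) * (Ps s \<circ> (\<lambda>t. \<beta> * t)) t = Ps s (\<beta> * t) / complex_of_real \<beta>"
    by (simp add: divide_inverse mult.commute)
  have e2: "inverse (complex_of_real \<beta>) * (\<beta> *\<^sub>R hs s (\<beta> * t)) = hs s (\<beta> * t)"
    using b by (simp add: scaleR_conv_of_real)
  show ?thesis using d4 unfolding e1 e2 .
qed

lemma seg_int: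
  assumes s: "s = 1 \<or> s = -1" and b: "\<beta> > 0" and c: "c = s * pi * \<beta>\<^sup>2 / 2" and pq: "p \<le> q"
  shows "((\<lambda>t. exp (\<i> * complex_of_real (c * t\<^sup>2))) has_integral
           (Ps s (\<beta> * q) / complex_of_real \<beta> - Ps s (\<beta> * p) / complex_of_real \<beta>)) {p..q}"
proof -
  have "((\<lambda>t. hs s (\<beta> * t)) has_integral
           (Ps s (\<beta> * q) / complex_of_real \<beta> - Ps s (\<beta> * p) / complex_of_real \<beta>)) {p..q}"
    by (rule fundamental_theorem_of_calculus[OF pq scaled_deriv[OF b]])
  moreover have "\<And>t. hs s (\<beta> * t) = exp (\<i> * complex_of_real (c * t\<^sup>2))"
    unfolding hs_exp[OF s] c by (simp add: power_mult_distrib algebra_simps)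
  ultimately show ?thesis by simp
qed

lemma sym_int:
  assumes s: "s = 1 \<or> s = -1" and b: "\<beta> > 0" and c: "c = s * pi * \<beta>\<^sup>2 / 2" and L: "0 \<le> L"
  shows "((\<lambda>t. exp (\<i> * complex_of_real (c * t\<^sup>2))) has_integral
           (2 * Ps s (\<beta> * L) / complex_of_real \<beta>)) {-L..L}"
  using seg_int[OF s b c, of "-L" L] L by (simp add: Ps_odd)

lemma telesc: "(\<Sum>n = 1..(N::nat). (h n - h (n - 1) :: 'a::ab_group_add)) = h N - h 0"
  by (induction N) auto

lemma box_int:
  fixes f :: "real \<Rightarrow> complex"
  assumes cf: "continuous_on UNIV f"
  shows "integral (cbox (p, r) (q, w)) (\<lambda>u. f (fst u) * f (snd u)) = integral {p..q} f * integral {r..w} f"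
proof -
  have "integral (cbox (p, r) (q, w)) (\<lambda>u. f (fst u) * f (snd u)) =
        integral (cbox p q) (\<lambda>x. integral (cbox r w) (\<lambda>y. f x * f y))"
  proof -
    have cc: "continuous_on (cbox (p, r) (q, w)) (\<lambda>u. f (fst u) * f (snd u))"
      by (intro continuous_intros continuous_on_compose2[OF cf]) auto
    show ?thesis using integral_prod_continuous[OF cc] by simp
  qed
  also have "\<dots> = integral {p..q} (\<lambda>x. f x * integral {r..w} f)"
    by (simp add: integral_mult_right)
  also have "\<dots> = integral {p..q} f * integral {r..w} f"
    by (simp add: integral_mult_left)
  finally show ?thesis .
qed

lemma cmod_Ps: "s = 1 \<or> s = -1 \<Longrightarrow> (cmod (Ps s u))\<^sup>2 = (fresnelC u)\<^sup>2 + (fresnelS u)\<^sup>2"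
  unfolding Ps_def cmod_power2 by auto

theorem theorem1:
  fixes lam z F :: real and N :: nat
  assumes "lam > 0" and "N \<ge> 1" and "z > 0" and "F > 0" and "z \<noteq> F"
  shows "let z_eff = F * z / \<bar>F - z\<bar>; a = lam / (8 * z_eff) in
         G_ULA lam N z F =
           ((fresnelC (sqrt a))\<^sup>2 + (fresnelS (sqrt a))\<^sup>2) *
           ((fresnelC (sqrt a * real N))\<^sup>2 + (fresnelS (sqrt a * real N))\<^sup>2) / (real N * a)\<^sup>2"
proof -
  note lp = assms(1) and Np = assms(2) and zp = assms(3) and Fp = assms(4) and zF = assms(5)
  define ze where "ze = F * z / \<bar>F - z\<bar>"
  define a where "a = lam / (8 * ze)"
  define \<delta> where "\<delta> = lam / 2"
  define c where "c = pi / lam * (1 / F - 1 / z)"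
  define s :: real where "s = (if z > F then 1 else -1)"
  define \<beta> where "\<beta> = 4 * sqrt a / lam"
  define f where "f = (\<lambda>t::real. exp (\<i> * complex_of_real (c * t\<^sup>2)))"
  define G where "G = (\<lambda>t. Ps s (\<beta> * t) / complex_of_real \<beta>)"
  have zep: "ze > 0" unfolding ze_def using zp Fp zF by auto
  have ap: "a > 0" unfolding a_def using zep lp by auto
  have bp: "\<beta> > 0" unfolding \<beta>_def using ap lp by auto
  have s1: "s = 1 \<or> s = -1" unfolding s_def by auto
  have b2: "\<beta>\<^sup>2 = 16 * a / lam\<^sup>2"
    unfolding \<beta>_def using ap by (simp add: power_divide power_mult_distrib)
  have cs: "c = s * pi * \<beta>\<^sup>2 / 2"
  proof -
    have h: "s * \<bar>F - z\<bar> = z - F" unfolding s_def by auto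
    have "s * pi * \<beta>\<^sup>2 / 2 = pi * (s * \<bar>F - z\<bar>) / (F * z * lam)"
      unfolding b2 a_def ze_def using lp zp Fp zF by (simp add: field_simps power2_eq_square)
    also have "\<dots> = c" unfolding h c_def using lp zp Fp by (simp add: field_simps)
    finally show ?thesis by simp
  qed
  have cf: "continuous_on UNIV f" unfolding f_def by (intro continuous_intros)
  have bd: "\<beta> * (\<delta> / 2) = sqrt a" unfolding \<beta>_def \<delta>_def using lp by simp
  have bdN: "\<beta> * (real N * \<delta> / 2) = sqrt a * real N" unfolding \<beta>_def \<delta>_def using lp by simp
  have dp: "\<delta> > 0" unfolding \<delta>_def using lp by simp
  have integrand: "\<And>x y. exp (\<i> * complex_of_real (2 * pi / lam * (x\<^sup>2 / (2 * F) + y\<^sup>2 / (2 * F))))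
                  * exp (- \<i> * complex_of_real (2 * pi / lam * (x\<^sup>2 / (2 * z) + y\<^sup>2 / (2 * z)))) = f x * f y"
  proof -
    fix x y :: real
    have "\<i> * complex_of_real (2 * pi / lam * (x\<^sup>2 / (2 * F) + y\<^sup>2 / (2 * F)))
          + (- \<i> * complex_of_real (2 * pi / lam * (x\<^sup>2 / (2 * z) + y\<^sup>2 / (2 * z))))
        = \<i> * complex_of_real (c * x\<^sup>2) + \<i> * complex_of_real (c * y\<^sup>2)"
    proof -
      have "2 * pi / lam * (x\<^sup>2 / (2 * F) + y\<^sup>2 / (2 * F)) - 2 * pi / lam * (x\<^sup>2 / (2 * z) + y\<^sup>2 / (2 * z))
            = c * x\<^sup>2 + c * y\<^sup>2"
        unfolding c_def using lp zp Fp by (simp add: field_simps)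
      then have "complex_of_real (2 * pi / lam * (x\<^sup>2 / (2 * F) + y\<^sup>2 / (2 * F))) - complex_of_real (2 * pi / lam * (x\<^sup>2 / (2 * z) + y\<^sup>2 / (2 * z)))
            = complex_of_real (c * x\<^sup>2) + complex_of_real (c * y\<^sup>2)"
        by (metis of_real_add of_real_diff)
      then show ?thesis by (simp add: algebra_simps)
    qed
    then show "exp (\<i> * complex_of_real (2 * pi / lam * (x\<^sup>2 / (2 * F) + y\<^sup>2 / (2 * F))))
                  * exp (- \<i> * complex_of_real (2 * pi / lam * (x\<^sup>2 / (2 * z) + y\<^sup>2 / (2 * z)))) = f x * f y"
      unfolding f_def by (metis exp_add)
  qed
  have Iy: "integral {-(\<delta>/2)..\<delta>/2} f = 2 * Ps s (sqrt a) / complex_of_real \<beta>"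
    using sym_int[OF s1 bp cs, of "\<delta>/2"] dp bd unfolding f_def by (simp add: integral_unique)
  have ant: "integral (ula_antenna lam N n)
          (\<lambda>(x, y). exp (\<i> * complex_of_real (2 * pi / lam * (x\<^sup>2 / (2 * F) + y\<^sup>2 / (2 * F))))
                  * exp (- \<i> * complex_of_real (2 * pi / lam * (x\<^sup>2 / (2 * z) + y\<^sup>2 / (2 * z)))))
        = (G ((real n - real N / 2) * \<delta>) - G ((real (n - 1) - real N / 2) * \<delta>)) * integral {-(\<delta>/2)..\<delta>/2} f"
    if n1: "n \<ge> 1" for n
  proof -
    define xn where "xn = (real n - (real N + 1) / 2) * \<delta>"
    have set: "ula_antenna lam N n = cbox (xn - \<delta>/2, -(\<delta>/2)) (xn + \<delta>/2, \<delta>/2)"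
      unfolding ula_antenna_def Let_def \<delta>_def[symmetric] xn_def[symmetric] cbox_Pair_eq abs_le_iff cbox_interval
      by auto
    have fn: "(\<lambda>(x, y). exp (\<i> * complex_of_real (2 * pi / lam * (x\<^sup>2 / (2 * F) + y\<^sup>2 / (2 * F))))
                  * exp (- \<i> * complex_of_real (2 * pi / lam * (x\<^sup>2 / (2 * z) + y\<^sup>2 / (2 * z)))))
          = (\<lambda>u. f (fst u) * f (snd u))"
      using integrand by auto
    have ix: "integral {xn - \<delta>/2..xn + \<delta>/2} f = G (xn + \<delta>/2) - G (xn - \<delta>/2)"
      using seg_int[OF s1 bp cs, of "xn - \<delta>/2" "xn + \<delta>/2"] dp unfolding f_def G_def
      by (simp add: integral_unique)
    have e1: "xn + \<delta>/2 = (real n - real N / 2) * \<delta>" unfolding xn_def by (simp add: field_simps)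
    have e2: "xn - \<delta>/2 = (real (n - 1) - real N / 2) * \<delta>" unfolding xn_def using n1
      by (simp add: of_nat_diff field_simps)
    show ?thesis unfolding set fn box_int[OF cf] ix unfolding e1 e2 ..
  qed
  have sumeq: "(\<Sum>n = 1..N. integral (ula_antenna lam N n)
          (\<lambda>(x, y). exp (\<i> * complex_of_real (2 * pi / lam * (x\<^sup>2 / (2 * F) + y\<^sup>2 / (2 * F))))
                  * exp (- \<i> * complex_of_real (2 * pi / lam * (x\<^sup>2 / (2 * z) + y\<^sup>2 / (2 * z))))))
      = (\<Sum>n = 1..N. G ((real n - real N / 2) * \<delta>) - G ((real (n - 1) - real N / 2) * \<delta>)) * integral {-(\<delta>/2)..\<delta>/2} f"
    unfolding sum_distrib_right by (rule sum.cong) (simp_all only: ant atLeastAtMost_iff)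
  have tel: "(\<Sum>n = 1..N. G ((real n - real N / 2) * \<delta>) - G ((real (n - 1) - real N / 2) * \<delta>))
       = 2 * Ps s (sqrt a * real N) / complex_of_real \<beta>"
  proof -
    have "(\<Sum>n = 1..N. G ((real n - real N / 2) * \<delta>) - G ((real (n - 1) - real N / 2) * \<delta>))
        = G ((real N - real N / 2) * \<delta>) - G ((real 0 - real N / 2) * \<delta>)"
      by (rule telesc[where h="\<lambda>m. G ((real m - real N / 2) * \<delta>)"])
    also have "\<dots> = G (real N * \<delta> / 2) - G (- (real N * \<delta> / 2))" by (simp add: field_simps)
    also have "\<dots> = 2 * Ps s (sqrt a * real N) / complex_of_real \<beta>"
      unfolding G_def mult_minus_right Ps_odd bdN by simp
    finally show ?thesis .
  qed
  have X: "(cmod (2 * Ps s (sqrt a) / complex_of_real \<beta>))\<^sup>2 = 4 * ((fresnelC (sqrt a))\<^sup>2 + (fresnelS (sqrt a))\<^sup>2) / \<beta>\<^sup>2"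
    using cmod_Ps[OF s1, of "sqrt a"] bp by (simp add: norm_divide norm_mult power_divide power_mult_distrib)
  have Y: "(cmod (2 * Ps s (sqrt a * real N) / complex_of_real \<beta>))\<^sup>2 = 4 * ((fresnelC (sqrt a * real N))\<^sup>2 + (fresnelS (sqrt a * real N))\<^sup>2) / \<beta>\<^sup>2"
    using cmod_Ps[OF s1, of "sqrt a * real N"] bp by (simp add: norm_divide norm_mult power_divide power_mult_distrib)
  have G: "G_ULA lam N z F = 1 / (real N * \<delta>\<^sup>2)\<^sup>2 *
      ((cmod (2 * Ps s (sqrt a * real N) / complex_of_real \<beta>))\<^sup>2 * (cmod (2 * Ps s (sqrt a) / complex_of_real \<beta>))\<^sup>2)"
    unfolding G_ULA_def Let_def \<delta>_def[symmetric] sumeq tel Iy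
    by (simp only: norm_mult power_mult_distrib)
  have b4: "(\<beta>\<^sup>2)\<^sup>2 = 256 * a\<^sup>2 / lam ^ 4" unfolding b2 by (simp add: power_divide power_mult_distrib)
  have fin: "G_ULA lam N z F = ((fresnelC (sqrt a))\<^sup>2 + (fresnelS (sqrt a))\<^sup>2) *
           ((fresnelC (sqrt a * real N))\<^sup>2 + (fresnelS (sqrt a * real N))\<^sup>2) / (real N * a)\<^sup>2"
  proof -
    define P where "P = (fresnelC (sqrt a))\<^sup>2 + (fresnelS (sqrt a))\<^sup>2"
    define Q where "Q = (fresnelC (sqrt a * real N))\<^sup>2 + (fresnelS (sqrt a * real N))\<^sup>2"
    have "G_ULA lam N z F = 1 / (real N * \<delta>\<^sup>2)\<^sup>2 * (16 * Q * P / (\<beta>\<^sup>2)\<^sup>2)"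
      unfolding G X Y P_def[symmetric] Q_def[symmetric] by (simp add: power2_eq_square)
    also have "\<dots> = P * Q / (real N * a)\<^sup>2"
      unfolding b4 \<delta>_def using lp ap Np by (simp add: field_simps power2_eq_square power4_eq_xxxx)
    finally show ?thesis unfolding P_def Q_def .
  qed
  show ?thesis unfolding Let_def ze_def[symmetric] a_def[symmetric] by (rule fin)
qed

end
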